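(* Let $\beta=(\beta_1,\ldots,\beta_\ell)$ be a composition of $N$ and $\mathcal{P}$ a subposet of the total order $1<\cdots<\ell$. The following are equivalent: (P1) $\mathcal{P}$ is a normal subposet of $1<\cdots<\ell$ (i.e. $(\beta,\mathcal{P})$ is a unipotent polytope); (P2) $\mathrm{fat}_\beta(\mathcal{P})$ is a normal (and Levi compatible) subposet of $\mathcal{Q}_\beta$; (P3) $P_\beta\subseteq N_{\mathrm{GL}_N}(\mathrm{UT}_{(\beta,\mathcal{P})})$.
   Context: Fix a prime power $q$; $\mathrm{GL}_N=\mathrm{GL}_N(\mathbb{F}_q)$. A subposet of a poset $(X,\prec_{\mathcal{R}})$ is a strict partial order $\prec_{\mathcal{P}}$ on the same set with $a\prec_{\mathcal{P}}b\Rightarrow a\prec_{\mathcal{R}}b$; it is normal if $j\prec_{\mathcal{P}}k$ implies $i\prec_{\mathcal{P}}k$ and $j\prec_{\mathcal{P}}l$ for all $i\prec_{\mathcal{R}}j$, $k\prec_{\mathcal{R}}l$. For a subposet $\mathcal{R}$ of $1<\cdots<N$, $\mathfrak{ut}_{\mathcal{R}}=\{x\in M_N(\mathbb{F}_q)\mid x_{ab}\neq0\Rightarrow a\prec_{\mathcal{R}}b\}$, $\mathrm{UT}_{\mathcal{R}}=\mathrm{Id}_N+\mathfrak{ut}_{\mathcal{R}}$. For a composition $\beta$ of $N$ with $\ell$ parts, $\mathcal{Q}_i=\{\beta_1+\cdots+\beta_{i-1}+1,\ldots,\beta_1+\cdots+\beta_i\}$; $\mathcal{Q}_\beta$ is the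 poset on $\{1,\ldots,N\}$ with $a\prec b$ iff $a\in\mathcal{Q}_i,b\in\mathcal{Q}_j,i<j$; $\mathrm{UT}_\beta=\mathrm{UT}_{\mathcal{Q}_\beta}$; $L_\beta$ is the block-diagonal subgroup $\mathrm{GL}_{\beta_1}\times\cdots\times\mathrm{GL}_{\beta_\ell}$ (blocks indexed by the $\mathcal{Q}_i$); $P_\beta=L_\beta\ltimes\mathrm{UT}_\beta$ (invertible block upper triangular matrices). A subposet $\mathcal{R}$ of $\mathcal{Q}_\beta$ is Levi compatible if $L_\beta\subseteq N_{\mathrm{GL}_N}(\mathrm{UT}_{\mathcal{R}})$. For a subposet $\mathcal{P}$ of $1<\cdots<\ell$, $\mathrm{fat}_\beta(\mathcal{P})$ is the poset on $\{1,\ldots,N\}$ with $a\prec b$ iff $a\in\mathcal{Q}_i,b\in\mathcal{Q}_j$ with $i\prec_{\mathcal{P}}j$, and $\mathrm{UT}_{(\beta,\mathcal{P})}=\mathrm{UT}_{\mathrm{fat}_\beta(\mathcal{P})}$. *)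

theory Defs
  imports "Jordan_Normal_Form.Matrix"
begin

definition chain_order :: "nat \<Rightarrow> (nat \<times> nat) set" where
  "chain_order n = {(a, b). 1 \<le> a \<and> a < b \<and> b \<le> n}"

definition is_subposet :: "nat set \<Rightarrow> (nat \<times> nat) set \<Rightarrow> (nat \<times> nat) set \<Rightarrow> bool" where
  "is_subposet X R P \<longleftrightarrow> P \<subseteq> X \<times> X \<and> irrefl P \<and> trans P \<and> P \<subseteq> R"

definition is_normal_subposet :: "nat set \<Rightarrow> (nat \<times> nat) set \<Rightarrow> (nat \<times> nat) set \<Rightarrow> bool" where
  "is_normal_subposet X R P \<longleftrightarrow> is_subposet X R P \<and>
     (\<forall>i j k l. (j, k) \<in> P \<longrightarrow>
        ((i, j) \<in> R \<longrightarrow> (i, k) \<in> P) \<and> ((k, l) \<in> R \<longrightarrow> (j, l) \<in> P))"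

definition is_composition :: "nat list \<Rightarrow> nat \<Rightarrow> bool" where
  "is_composition \<beta> N \<longleftrightarrow> (\<forall>b \<in> set \<beta>. 0 < b) \<and> sum_list \<beta> = N"

text \<open>The i-th block (1-indexed) of the composition.\<close>
definition block :: "nat list \<Rightarrow> nat \<Rightarrow> nat set" where
  "block \<beta> i = {sum_list (take (i - 1) \<beta>) + 1 .. sum_list (take i \<beta>)}"

definition Q_order :: "nat list \<Rightarrow> (nat \<times> nat) set" where
  "Q_order \<beta> = {(a, b). \<exists>i j. 1 \<le> i \<and> i < j \<and> j \<le> length \<beta> \<and>
                      a \<in> block \<beta> i \<and> b \<in> block \<beta> j}"

definition fat :: "nat list \<Rightarrow> (nat \<times> nat) set \<Rightarrow> (nat \<times> nat) set" where
  "fat \<beta> P = {(a, b). \<exists>i j. (i, j) \<in> P \<and> a \<in> block \<beta> i \<and> b \<in> block \<beta> j}"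

text \<open>Matrices are 0-indexed in Jordan_Normal_Form: entry (a,b) of the paper
  is entry (a-1,b-1) here.\<close>

definition GL :: "nat \<Rightarrow> 'a::field mat set" where
  "GL N = {g \<in> carrier_mat N N. invertible_mat g}"

definition ut_lie :: "nat \<Rightarrow> (nat \<times> nat) set \<Rightarrow> 'a::field mat set" where
  "ut_lie N R = {x \<in> carrier_mat N N. \<forall>a < N. \<forall>b < N.
                   x $$ (a, b) \<noteq> 0 \<longrightarrow> (a + 1, b + 1) \<in> R}"

definition UT :: "nat \<Rightarrow> (nat \<times> nat) set \<Rightarrow> 'a::field mat set" where
  "UT N R = {1\<^sub>m N + x | x. x \<in> ut_lie N R}"

definition normalizer :: "nat \<Rightarrow> 'a::field mat set \<Rightarrow> 'a mat set" where
  "normalizer N H = {g \<in> GL N. (\<lambda>h. g * h) ` H = (\<lambda>h. h * g) ` H}"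

definition Levi :: "nat list \<Rightarrow> 'a::field mat set" where
  "Levi \<beta> = {g \<in> GL (sum_list \<beta>). \<forall>a < sum_list \<beta>. \<forall>b < sum_list \<beta>.
     g $$ (a, b) \<noteq> 0 \<longrightarrow> (\<exists>i. a + 1 \<in> block \<beta> i \<and> b + 1 \<in> block \<beta> i)}"

definition Parabolic :: "nat list \<Rightarrow> 'a::field mat set" where
  "Parabolic \<beta> = {g \<in> GL (sum_list \<beta>). \<forall>a < sum_list \<beta>. \<forall>b < sum_list \<beta>.
     g $$ (a, b) \<noteq> 0 \<longrightarrow> (\<exists>i j. i \<le> j \<and> a + 1 \<in> block \<beta> i \<and> b + 1 \<in> block \<beta> j)}"

definition levi_compatible :: "'a::field itself \<Rightarrow> nat list \<Rightarrow> (nat \<times> nat) set \<Rightarrow> bool" where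
  "levi_compatible _ \<beta> R \<longleftrightarrow>
     (Levi \<beta> :: 'a mat set) \<subseteq> normalizer (sum_list \<beta>) (UT (sum_list \<beta>) R :: 'a mat set)"

end

theory Submission
  imports Defs "HOL-Library.FuncSet"
begin

lemma S_mono: "i \<le> j \<Longrightarrow> sum_list (take i (xs::nat list)) \<le> sum_list (take j xs)"
proof -
  assume "i \<le> j"
  then obtain k where "j = i + k" using le_Suc_ex by blast
  then show ?thesis by (simp add: take_add)
qed

lemma S_le_sum: "sum_list (take i (xs::nat list)) \<le> sum_list xs"
  by (metis S_mono nat_le_linear take_all_iff)

lemma block_unique: "a \<in> block \<beta> i \<Longrightarrow> a \<in> block \<beta> j \<Longrightarrow> i = j"
proof (rule ccontr)
  assume a: "a \<in> block \<beta> i" "a \<in> block \<beta> j" "i \<noteq> j"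
  have *: "False" if "i' < j'" "a \<in> block \<beta> i'" "a \<in> block \<beta> j'" for i' j'
  proof -
    have "sum_list (take i' \<beta>) \<le> sum_list (take (j' - 1) \<beta>)" using that(1) by (intro S_mono) simp
    then show False using that(2,3) by (auto simp: block_def)
  qed
  show False using a *[of i j] *[of j i] by (cases "i < j") auto
qed

lemma block_less: "a \<in> block \<beta> i \<Longrightarrow> b \<in> block \<beta> j \<Longrightarrow> i < j \<Longrightarrow> a < b"
proof -
  assume that: "a \<in> block \<beta> i" "b \<in> block \<beta> j" "i < j"
  have "sum_list (take i \<beta>) \<le> sum_list (take (j - 1) \<beta>)" using that(3) by (intro S_mono) simp
  then show ?thesis using that(1,2) by (auto simp: block_def)
qed

lemma block_range: "a \<in> block \<beta> i \<Longrightarrow> 1 \<le> i \<and> i \<le> length \<beta>"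
proof -
  assume a: "a \<in> block \<beta> i"
  have "i \<noteq> 0" using a by (cases "i = 0") (auto simp: block_def)
  moreover have "\<not> i > length \<beta>" using a by (auto simp: block_def)
  ultimately show ?thesis by auto
qed

lemma block_bound: "a \<in> block \<beta> i \<Longrightarrow> 1 \<le> a \<and> a \<le> sum_list \<beta>"
  using S_le_sum[of i \<beta>] by (auto simp: block_def)

lemma block_exists:
  assumes "1 \<le> a" "a \<le> sum_list \<beta>"
  shows "\<exists>i. a \<in> block \<beta> i"
proof -
  define i where "i = (LEAST i. a \<le> sum_list (take i \<beta>))"
  have ex: "a \<le> sum_list (take (length \<beta>) \<beta>)" using assms by simp
  have i1: "a \<le> sum_list (take i \<beta>)" unfolding i_def by (rule LeastI[where P="\<lambda>i. a \<le> sum_list (take i \<beta>)", OF ex])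
  have "i \<noteq> 0" using i1 assms by (cases "i = 0") auto
  then have lt: "i - 1 < i" by simp
  have "\<not> a \<le> sum_list (take (i - 1) \<beta>)"
    using not_less_Least[of "i - 1" "\<lambda>i. a \<le> sum_list (take i \<beta>)"] lt unfolding i_def by blast
  then have "a \<in> block \<beta> i" using i1 by (auto simp: block_def)
  then show ?thesis by blast
qed

lemma block_last:
  assumes pos: "\<forall>b \<in> set \<beta>. 0 < b" and i: "1 \<le> i" "i \<le> length \<beta>"
  shows "sum_list (take i \<beta>) \<in> block \<beta> i"
proof -
  obtain j where j: "i = Suc j" using i by (cases i) auto
  have "take i \<beta> = take (i - 1) \<beta> @ [\<beta> ! (i - 1)]"
    using i j by (simp add: take_Suc_conv_app_nth)
  moreover have "\<beta> ! (i - 1) > 0" using pos i by auto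
  ultimately show ?thesis by (auto simp: block_def)
qed

lemma fat_normal_iff:
  assumes pos: "\<forall>b \<in> set \<beta>. 0 < b"
    and sub: "is_subposet {1..length \<beta>} (chain_order (length \<beta>)) P"
  shows "is_normal_subposet {1..length \<beta>} (chain_order (length \<beta>)) P
     \<longleftrightarrow> is_normal_subposet {1..sum_list \<beta>} (Q_order \<beta>) (fat \<beta> P)"
proof
  have Psub: "P \<subseteq> chain_order (length \<beta>)" and Pirr: "irrefl P" and Ptr: "trans P"
    using sub by (auto simp: is_subposet_def)
  assume Pn: "is_normal_subposet {1..length \<beta>} (chain_order (length \<beta>)) P"
  have L: "(i, k) \<in> P" if "(j, k) \<in> P" "(i, j) \<in> chain_order (length \<beta>)" for i j k
    using Pn that unfolding is_normal_subposet_def by blast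
  have R: "(j, l) \<in> P" if "(j, k) \<in> P" "(k, l) \<in> chain_order (length \<beta>)" for j k l
    using Pn that unfolding is_normal_subposet_def by blast
  have s1: "fat \<beta> P \<subseteq> {1..sum_list \<beta>} \<times> {1..sum_list \<beta>}"
    using block_bound unfolding fat_def by fastforce
  have s2: "irrefl (fat \<beta> P)"
    unfolding irrefl_def fat_def using block_unique Pirr unfolding irrefl_def by blast
  have s3: "trans (fat \<beta> P)"
  proof (rule transI)
    fix a b c assume "(a, b) \<in> fat \<beta> P" "(b, c) \<in> fat \<beta> P"
    then obtain i j j' k where "(i, j) \<in> P" "(j', k) \<in> P" "a \<in> block \<beta> i" "b \<in> block \<beta> j"
      "b \<in> block \<beta> j'" "c \<in> block \<beta> k" by (auto simp: fat_def)
    moreover then have "j = j'" using block_unique by blast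
    ultimately show "(a, c) \<in> fat \<beta> P" using Ptr unfolding fat_def trans_def by blast
  qed
  have s4: "fat \<beta> P \<subseteq> Q_order \<beta>"
    using Psub unfolding fat_def Q_order_def chain_order_def by blast
  have n1: "(c, b) \<in> fat \<beta> P" if h1: "(a, b) \<in> fat \<beta> P" and h2: "(c, a) \<in> Q_order \<beta>" for a b c
  proof -
    obtain i j where ij: "(i, j) \<in> P" "a \<in> block \<beta> i" "b \<in> block \<beta> j" using h1 by (auto simp: fat_def)
    obtain i' i'' where "1 \<le> i'" "i' < i''" "i'' \<le> length \<beta>" "c \<in> block \<beta> i'" "a \<in> block \<beta> i''"
      using h2 by (auto simp: Q_order_def)
    moreover then have "i'' = i" using ij block_unique by blast
    ultimately have "(i', j) \<in> P" using L[OF ij(1)] unfolding chain_order_def by auto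
    then show ?thesis using ij \<open>c \<in> block \<beta> i'\<close> by (auto simp: fat_def)
  qed
  have n2: "(a, d) \<in> fat \<beta> P" if h1: "(a, b) \<in> fat \<beta> P" and h2: "(b, d) \<in> Q_order \<beta>" for a b d
  proof -
    obtain i j where ij: "(i, j) \<in> P" "a \<in> block \<beta> i" "b \<in> block \<beta> j" using h1 by (auto simp: fat_def)
    obtain j' k where "1 \<le> j'" "j' < k" "k \<le> length \<beta>" "b \<in> block \<beta> j'" "d \<in> block \<beta> k"
      using h2 by (auto simp: Q_order_def)
    moreover then have "j' = j" using ij block_unique by blast
    ultimately have "(i, k) \<in> P" using R[OF ij(1)] unfolding chain_order_def by auto
    then show ?thesis using ij \<open>d \<in> block \<beta> k\<close> by (auto simp: fat_def)
  qed
  show "is_normal_subposet {1..sum_list \<beta>} (Q_order \<beta>) (fat \<beta> P)"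
    unfolding is_normal_subposet_def is_subposet_def using s1 s2 s3 s4 n1 n2 by blast
next
  assume Fn: "is_normal_subposet {1..sum_list \<beta>} (Q_order \<beta>) (fat \<beta> P)"
  have Psub: "P \<subseteq> chain_order (length \<beta>)" using sub by (auto simp: is_subposet_def)
  define e where "e i = sum_list (take i \<beta>)" for i
  have eb: "e i \<in> block \<beta> i" if "1 \<le> i" "i \<le> length \<beta>" for i
    using block_last[OF pos that] unfolding e_def .
  have fatP: "(i, k) \<in> P" if h1: "(e i, e k) \<in> fat \<beta> P" and "1 \<le> i" "i \<le> length \<beta>" "1 \<le> k" "k \<le> length \<beta>" for i k
  proof -
    obtain i' k' where "(i', k') \<in> P" "e i \<in> block \<beta> i'" "e k \<in> block \<beta> k'" using h1 by (auto simp: fat_def)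
    moreover have "i' = i" "k' = k" using calculation eb that block_unique by blast+
    ultimately show ?thesis by simp
  qed
  have inP: "1 \<le> j \<and> j \<le> length \<beta> \<and> 1 \<le> k \<and> k \<le> length \<beta>" if "(j, k) \<in> P" for j k
    using that Psub unfolding chain_order_def by auto
  show "is_normal_subposet {1..length \<beta>} (chain_order (length \<beta>)) P"
    unfolding is_normal_subposet_def
  proof (intro conjI allI impI)
    show "is_subposet {1..length \<beta>} (chain_order (length \<beta>)) P" by (rule sub)
  next
    fix i j k l assume jk: "(j, k) \<in> P" and ij: "(i, j) \<in> chain_order (length \<beta>)"
    have r: "1 \<le> i" "i < j" "j \<le> length \<beta>" using ij unfolding chain_order_def by auto
    have f: "(e j, e k) \<in> fat \<beta> P" using jk eb inP[OF jk] by (auto simp: fat_def)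
    have q: "(e i, e j) \<in> Q_order \<beta>" using r eb unfolding Q_order_def by force
    have "(e i, e k) \<in> fat \<beta> P" using Fn f q unfolding is_normal_subposet_def by blast
    then show "(i, k) \<in> P" using fatP r inP[OF jk] by simp
  next
    fix i j k l assume jk: "(j, k) \<in> P" and kl: "(k, l) \<in> chain_order (length \<beta>)"
    have r: "1 \<le> k" "k < l" "l \<le> length \<beta>" using kl unfolding chain_order_def by auto
    have f: "(e j, e k) \<in> fat \<beta> P" using jk eb inP[OF jk] by (auto simp: fat_def)
    have q: "(e k, e l) \<in> Q_order \<beta>" using r eb unfolding Q_order_def by force
    have "(e j, e l) \<in> fat \<beta> P" using Fn f q unfolding is_normal_subposet_def by blast
    then show "(j, l) \<in> P" using fatP r inP[OF jk] by simp
  qed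
qed


lemma finite_carrier_mat: "finite (carrier_mat n m :: 'a::finite mat set)"
proof -
  let ?D = "{0..<n} \<times> {0..<m} \<rightarrow>\<^sub>E (UNIV :: 'a set)"
  have sub: "carrier_mat n m \<subseteq> (\<lambda>f. mat n m f) ` ?D"
  proof
    fix A :: "'a mat" assume A: "A \<in> carrier_mat n m"
    have "A = mat n m (restrict (\<lambda>ij. A $$ ij) ({0..<n} \<times> {0..<m}))"
      using A by (intro eq_matI) (simp_all add: restrict_def)
    moreover have "restrict (\<lambda>ij. A $$ ij) ({0..<n} \<times> {0..<m}) \<in> ?D" by simp
    ultimately show "A \<in> (\<lambda>f. mat n m f) ` ?D" by (rule image_eqI)
  qed
  have "finite ?D" by (intro finite_PiE) simp_all
  then have "finite ((\<lambda>f. mat n m f) ` ?D)" by (rule finite_imageI)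
  then show ?thesis using sub by (rule finite_subset[rotated])
qed
lemma mult_entry_nz:
  assumes A: "A \<in> carrier_mat N N" and B: "B \<in> carrier_mat N N" and ab: "a < N" "b < N"
    and nz: "(A * B) $$ (a, b) \<noteq> (0::'a::field)"
  shows "\<exists>c < N. A $$ (a, c) \<noteq> 0 \<and> B $$ (c, b) \<noteq> 0"
proof (rule ccontr)
  assume "\<not> ?thesis"
  then have "\<forall>c \<in> {0..<N}. A $$ (a, c) * B $$ (c, b) = 0" by auto
  then have "(\<Sum>c \<in> {0..<N}. A $$ (a, c) * B $$ (c, b)) = 0" by (intro sum.neutral) blast
  moreover have "(A * B) $$ (a, b) = (\<Sum>c \<in> {0..<N}. A $$ (a, c) * B $$ (c, b))"
    using A B ab by (simp add: scalar_prod_def)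
  ultimately show False using nz by simp
qed

lemma GL_inv:
  assumes "g \<in> GL N"
  obtains h where "h \<in> carrier_mat N N" "g * h = 1\<^sub>m N" "h * g = 1\<^sub>m N"
proof -
  from assms have g: "g \<in> carrier_mat N N" and "invertible_mat g" by (auto simp: GL_def)
  then obtain h where gh: "g * h = 1\<^sub>m (dim_row g)" and hg: "h * g = 1\<^sub>m (dim_row h)"
    unfolding invertible_mat_def inverts_mat_def by blast
  have "dim_col h = dim_col (g * h)" by simp
  also have "\<dots> = N" using gh g by simp
  finally have c: "dim_col h = N" .
  have "dim_row h = dim_col (h * g)" using hg by simp
  also have "\<dots> = N" using g by simp
  finally have "dim_row h = N" .
  note c this
  then show ?thesis using that gh hg g by auto
qed

lemma normalizer_crit:
  fixes g :: "'a::{field,finite} mat"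
  assumes g: "g \<in> GL N"
    and cl: "\<And>x. x \<in> ut_lie N R \<Longrightarrow> g * x \<in> ut_lie N R \<and> x * g \<in> ut_lie N R"
  shows "g \<in> normalizer N (UT N R)"
proof -
  define M where "M = (ut_lie N R :: 'a mat set)"
  obtain h where h: "h \<in> carrier_mat N N" "g * h = 1\<^sub>m N" "h * g = 1\<^sub>m N" using GL_inv[OF g] by blast
  have gc: "g \<in> carrier_mat N N" using g by (auto simp: GL_def)
  have Mc: "M \<subseteq> carrier_mat N N" unfolding M_def ut_lie_def by auto
  have fin: "finite M" using finite_subset[OF Mc finite_carrier_mat] .
  have inj1: "inj_on (\<lambda>m. g * m) M"
  proof (rule inj_onI)
    fix m1 m2 assume m: "m1 \<in> M" "m2 \<in> M" "g * m1 = g * m2"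
    have c: "m1 \<in> carrier_mat N N" "m2 \<in> carrier_mat N N" using m Mc by auto
    have "m1 = (h * g) * m1" using h(3) c by simp
    also have "\<dots> = h * (g * m1)" using h(1) gc c by simp
    also have "\<dots> = h * (g * m2)" using m by simp
    also have "\<dots> = (h * g) * m2" using h(1) gc c by simp
    also have "\<dots> = m2" using h(3) c by simp
    finally show "m1 = m2" .
  qed
  have inj2: "inj_on (\<lambda>m. m * g) M"
  proof (rule inj_onI)
    fix m1 m2 assume m: "m1 \<in> M" "m2 \<in> M" "m1 * g = m2 * g"
    have c: "m1 \<in> carrier_mat N N" "m2 \<in> carrier_mat N N" using m Mc by auto
    have "m1 = m1 * (g * h)" using h(2) c by simp
    also have "\<dots> = (m1 * g) * h" using h(1) gc c by simp
    also have "\<dots> = (m2 * g) * h" using m by simp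
    also have "\<dots> = m2 * (g * h)" using h(1) gc c by simp
    also have "\<dots> = m2" using h(2) c by simp
    finally show "m1 = m2" .
  qed
  have E1: "(\<lambda>m. g * m) ` M = M"
    by (rule endo_inj_surj[OF fin _ inj1]) (use cl in \<open>auto simp: M_def\<close>)
  have E2: "(\<lambda>m. m * g) ` M = M"
    by (rule endo_inj_surj[OF fin _ inj2]) (use cl in \<open>auto simp: M_def\<close>)
  have L: "g * (1\<^sub>m N + x) = g + g * x" if "x \<in> M" for x
  proof -
    have xc: "x \<in> carrier_mat N N" using that Mc by auto
    show ?thesis using mult_add_distrib_mat[OF gc one_carrier_mat xc] gc by simp
  qed
  have Rr: "(1\<^sub>m N + x) * g = g + x * g" if "x \<in> M" for x
  proof -
    have xc: "x \<in> carrier_mat N N" using that Mc by auto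
    show ?thesis using add_mult_distrib_mat[OF one_carrier_mat xc gc] gc by simp
  qed
  have "(\<lambda>u. g * u) ` UT N R = (\<lambda>u. u * g) ` UT N R"
  proof
    show "(\<lambda>u. g * u) ` UT N R \<subseteq> (\<lambda>u. u * g) ` UT N R"
    proof
      fix v assume "v \<in> (\<lambda>u. g * u) ` UT N R"
      then obtain x where x: "x \<in> M" "v = g * (1\<^sub>m N + x)" by (auto simp: UT_def M_def)
      have "g * x \<in> (\<lambda>m. m * g) ` M" using E1 E2 x(1) by blast
      then obtain y where y: "y \<in> M" "g * x = y * g" by blast
      have "v = (1\<^sub>m N + y) * g" using x y L Rr by simp
      moreover have "1\<^sub>m N + y \<in> UT N R" using y unfolding UT_def M_def by blast
      ultimately show "v \<in> (\<lambda>u. u * g) ` UT N R" by blast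
    qed
  next
    show "(\<lambda>u. u * g) ` UT N R \<subseteq> (\<lambda>u. g * u) ` UT N R"
    proof
      fix v assume "v \<in> (\<lambda>u. u * g) ` UT N R"
      then obtain x where x: "x \<in> M" "v = (1\<^sub>m N + x) * g" by (auto simp: UT_def M_def)
      have "x * g \<in> (\<lambda>m. g * m) ` M" using E1 E2 x(1) by blast
      then obtain y where y: "y \<in> M" "x * g = g * y" by blast
      have "v = g * (1\<^sub>m N + y)" using x y L Rr by simp
      moreover have "1\<^sub>m N + y \<in> UT N R" using y unfolding UT_def M_def by blast
      ultimately show "v \<in> (\<lambda>u. g * u) ` UT N R" by blast
    qed
  qed
  then show ?thesis using g unfolding normalizer_def by blast
qed

lemma parabolic_normalizes:
  assumes comp: "is_composition \<beta> N"
    and Pn: "is_normal_subposet {1..length \<beta>} (chain_order (length \<beta>)) P"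
  shows "(Parabolic \<beta> :: 'a::{field,finite} mat set) \<subseteq> normalizer N (UT N (fat \<beta> P))"
proof
  fix g :: "'a mat" assume g: "g \<in> Parabolic \<beta>"
  have N: "sum_list \<beta> = N" using comp by (simp add: is_composition_def)
  have gGL: "g \<in> GL N" using g N by (simp add: Parabolic_def)
  have gc: "g \<in> carrier_mat N N" using gGL by (simp add: GL_def)
  have gent: "\<exists>i j. i \<le> j \<and> a + 1 \<in> block \<beta> i \<and> b + 1 \<in> block \<beta> j"
    if "a < N" "b < N" "g $$ (a, b) \<noteq> 0" for a b
    using g that N unfolding Parabolic_def by auto
  have L: "(i, k) \<in> P" if "(j, k) \<in> P" "(i, j) \<in> chain_order (length \<beta>)" for i j k
    using Pn that unfolding is_normal_subposet_def by blast
  have R: "(j, l) \<in> P" if "(j, k) \<in> P" "(k, l) \<in> chain_order (length \<beta>)" for j k l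
    using Pn that unfolding is_normal_subposet_def by blast
  show "g \<in> normalizer N (UT N (fat \<beta> P))"
  proof (rule normalizer_crit[OF gGL])
    fix x :: "'a mat" assume x: "x \<in> ut_lie N (fat \<beta> P)"
    have xc: "x \<in> carrier_mat N N" using x by (simp add: ut_lie_def)
    have xent: "(a + 1, b + 1) \<in> fat \<beta> P" if "a < N" "b < N" "x $$ (a, b) \<noteq> 0" for a b
      using x that unfolding ut_lie_def by blast
    have "g * x \<in> ut_lie N (fat \<beta> P)"
      unfolding ut_lie_def
    proof (intro CollectI conjI allI impI)
      show "g * x \<in> carrier_mat N N" using gc xc by simp
      fix a b assume ab: "a < N" "b < N" and nz: "(g * x) $$ (a, b) \<noteq> 0"
      obtain c where c: "c < N" "g $$ (a, c) \<noteq> 0" "x $$ (c, b) \<noteq> 0"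
        using mult_entry_nz[OF gc xc ab nz] by blast
      obtain i i' where ii: "i \<le> i'" "a + 1 \<in> block \<beta> i" "c + 1 \<in> block \<beta> i'"
        using gent[OF ab(1) c(1,2)] by blast
      obtain i'' j where ij: "(i'', j) \<in> P" "c + 1 \<in> block \<beta> i''" "b + 1 \<in> block \<beta> j"
        using xent[OF c(1) ab(2) c(3)] by (auto simp: fat_def)
      have "i'' = i'" using ij(2) ii(3) block_unique by blast
      have "(i, j) \<in> P"
      proof (cases "i = i'")
        case True then show ?thesis using ij \<open>i'' = i'\<close> by simp
      next
        case False
        then have "(i, i') \<in> chain_order (length \<beta>)"
          using ii block_range[OF ii(2)] block_range[OF ii(3)] unfolding chain_order_def by auto
        then show ?thesis using L ij(1) \<open>i'' = i'\<close> by blast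
      qed
      then show "(a + 1, b + 1) \<in> fat \<beta> P" using ii(2) ij(3) unfolding fat_def by blast
    qed
    moreover have "x * g \<in> ut_lie N (fat \<beta> P)"
      unfolding ut_lie_def
    proof (intro CollectI conjI allI impI)
      show "x * g \<in> carrier_mat N N" using gc xc by simp
      fix a b assume ab: "a < N" "b < N" and nz: "(x * g) $$ (a, b) \<noteq> 0"
      obtain c where c: "c < N" "x $$ (a, c) \<noteq> 0" "g $$ (c, b) \<noteq> 0"
        using mult_entry_nz[OF xc gc ab nz] by blast
      obtain j k where jk: "j \<le> k" "c + 1 \<in> block \<beta> j" "b + 1 \<in> block \<beta> k"
        using gent[OF c(1) ab(2) c(3)] by blast
      obtain i j' where ij: "(i, j') \<in> P" "a + 1 \<in> block \<beta> i" "c + 1 \<in> block \<beta> j'"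
        using xent[OF ab(1) c(1) c(2)] by (auto simp: fat_def)
      have "j' = j" using ij(3) jk(2) block_unique by blast
      have "(i, k) \<in> P"
      proof (cases "j = k")
        case True then show ?thesis using ij \<open>j' = j\<close> by simp
      next
        case False
        then have "(j, k) \<in> chain_order (length \<beta>)"
          using jk block_range[OF jk(2)] block_range[OF jk(3)] unfolding chain_order_def by auto
        then show ?thesis using R ij(1) \<open>j' = j\<close> by blast
      qed
      then show "(a + 1, b + 1) \<in> fat \<beta> P" using ij(2) jk(3) unfolding fat_def by blast
    qed
    ultimately show "g * x \<in> ut_lie N (fat \<beta> P) \<and> x * g \<in> ut_lie N (fat \<beta> P)" by blast
  qed
qed

lemma Levi_sub_Parabolic: "Levi \<beta> \<subseteq> Parabolic \<beta>"
  unfolding Levi_def Parabolic_def by blast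

definition gm :: "nat \<Rightarrow> nat \<Rightarrow> nat \<Rightarrow> 'a::field \<Rightarrow> 'a mat" where
  "gm N p q c = mat N N (\<lambda>(i, j). (if i = j then 1 else 0) + (if i = p \<and> j = q then c else 0))"

lemma gm_carrier: "gm N p q c \<in> carrier_mat N N"
  by (simp add: gm_def)

lemma gm_left:
  assumes A: "A \<in> carrier_mat N N" and ab: "a < N" "b < N" and pq: "q < N"
  shows "(gm N p q c * A) $$ (a, b) = A $$ (a, b) + (if a = p then c * A $$ (q, b) else 0)"
proof -
  have "(gm N p q c * A) $$ (a, b) = (\<Sum>k \<in> {0..<N}. ((if a = k then 1 else 0) + (if a = p \<and> k = q then c else 0)) * A $$ (k, b))"
    using A ab by (simp add: gm_def scalar_prod_def)
  also have "\<dots> = (\<Sum>k \<in> {0..<N}. (if a = k then A $$ (k, b) else 0) + (if k = q then (if a = p then c * A $$ (k, b) else 0) else 0))"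
    by (rule sum.cong) (auto simp: distrib_right)
  also have "\<dots> = (\<Sum>k \<in> {0..<N}. (if a = k then A $$ (k, b) else 0)) + (\<Sum>k \<in> {0..<N}. (if k = q then (if a = p then c * A $$ (k, b) else 0) else 0))"
    by (rule sum.distrib)
  also have "\<dots> = A $$ (a, b) + (if a = p then c * A $$ (q, b) else 0)"
    using ab pq by simp
  finally show ?thesis .
qed

lemma gm_right:
  assumes A: "A \<in> carrier_mat N N" and ab: "a < N" "b < N" and pq: "p < N"
  shows "(A * gm N p q c) $$ (a, b) = A $$ (a, b) + (if b = q then c * A $$ (a, p) else 0)"
proof -
  have "(A * gm N p q c) $$ (a, b) = (\<Sum>k \<in> {0..<N}. A $$ (a, k) * ((if k = b then 1 else 0) + (if k = p \<and> b = q then c else 0)))"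
    using A ab by (simp add: gm_def scalar_prod_def)
  also have "\<dots> = (\<Sum>k \<in> {0..<N}. (if b = k then A $$ (a, k) else 0) + (if k = p then (if b = q then c * A $$ (a, k) else 0) else 0))"
    by (rule sum.cong) (auto simp: distrib_left mult.commute)
  also have "\<dots> = (\<Sum>k \<in> {0..<N}. (if b = k then A $$ (a, k) else 0)) + (\<Sum>k \<in> {0..<N}. (if k = p then (if b = q then c * A $$ (a, k) else 0) else 0))"
    by (rule sum.distrib)
  also have "\<dots> = A $$ (a, b) + (if b = q then c * A $$ (a, p) else 0)"
    using ab pq by simp
  finally show ?thesis .
qed

lemma gm_GL:
  assumes pq: "p < N" "q < N" "p \<noteq> q"
  shows "(gm N p q (c::'a::field)) \<in> GL N"
proof -
  let ?g = "gm N p q c" and ?h = "gm N p q (- c)"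
  have e: "?g $$ (a, b) = (if a = b then 1 else 0) + (if a = p \<and> b = q then c else 0)"
    "?h $$ (a, b) = (if a = b then 1 else 0) + (if a = p \<and> b = q then - c else 0)"
    if "a < N" "b < N" for a b using that by (auto simp: gm_def)
  have 1: "?g * ?h = 1\<^sub>m N"
  proof (rule eq_matI)
    fix a b assume ab: "a < dim_row (1\<^sub>m N :: 'a mat)" "b < dim_col (1\<^sub>m N :: 'a mat)"
    then have ab': "a < N" "b < N" by auto
    show "(?g * ?h) $$ (a, b) = 1\<^sub>m N $$ (a, b)"
      using gm_left[OF gm_carrier ab' pq(2), of p c] e[OF ab'] e[OF pq(2) ab'(2)] ab' pq(3) by auto
  qed (auto simp: gm_def)
  have 2: "?h * ?g = 1\<^sub>m N"
  proof (rule eq_matI)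
    fix a b assume ab: "a < dim_row (1\<^sub>m N :: 'a mat)" "b < dim_col (1\<^sub>m N :: 'a mat)"
    then have ab': "a < N" "b < N" by auto
    show "(?h * ?g) $$ (a, b) = 1\<^sub>m N $$ (a, b)"
      using gm_left[OF gm_carrier ab' pq(2), of p "- c"] e[OF ab'] e[OF pq(2) ab'(2)] ab' pq(3) by auto
  qed (auto simp: gm_def)
  show ?thesis unfolding GL_def invertible_mat_def inverts_mat_def
    using 1 2 gm_carrier[of N p q c] gm_carrier[of N p q "-c"] by (auto simp: gm_def)
qed

lemma gm_Parabolic:
  assumes comp: "is_composition \<beta> N" and pq: "p < N" "q < N" "p \<noteq> q"
    and bl: "p + 1 \<in> block \<beta> i" "q + 1 \<in> block \<beta> j" "i \<le> j"
  shows "(gm N p q (c::'a::field)) \<in> Parabolic \<beta>"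
proof -
  have N: "sum_list \<beta> = N" using comp by (simp add: is_composition_def)
  have "\<exists>i j. i \<le> j \<and> a + 1 \<in> block \<beta> i \<and> b + 1 \<in> block \<beta> j"
    if ab: "a < N" "b < N" and nz: "gm N p q c $$ (a, b) \<noteq> 0" for a b
  proof (cases "a = b")
    case True
    obtain k where "a + 1 \<in> block \<beta> k" using block_exists[of "a + 1" \<beta>] ab N by auto
    then show ?thesis using True by blast
  next
    case False
    then have "a = p \<and> b = q" using nz ab by (auto simp: gm_def split: if_splits)
    then show ?thesis using bl by blast
  qed
  then show ?thesis using gm_GL[OF pq] N unfolding Parabolic_def by auto
qed

lemma normalizer_conj:
  assumes g: "g \<in> normalizer N (UT N R)" and x: "x \<in> ut_lie N R"
  shows "\<exists>y \<in> ut_lie N R. g * (1\<^sub>m N + x) = (1\<^sub>m N + y) * g"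
proof -
  have "1\<^sub>m N + x \<in> UT N R" using x unfolding UT_def by blast
  then have "g * (1\<^sub>m N + x) \<in> (\<lambda>h. h * g) ` UT N R" using g unfolding normalizer_def by blast
  then show ?thesis unfolding UT_def by auto
qed

lemma normalizer_forces_normal:
  assumes comp: "is_composition \<beta> N"
    and sub: "is_subposet {1..length \<beta>} (chain_order (length \<beta>)) P"
    and H: "(Parabolic \<beta> :: 'a::field mat set) \<subseteq> normalizer N (UT N (fat \<beta> P))"
  shows "is_normal_subposet {1..length \<beta>} (chain_order (length \<beta>)) P"
proof -
  have N: "sum_list \<beta> = N" and pos: "\<forall>b \<in> set \<beta>. 0 < b" using comp by (auto simp: is_composition_def)
  have Psub: "P \<subseteq> chain_order (length \<beta>)" using sub by (auto simp: is_subposet_def)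
  define e where "e i = sum_list (take i \<beta>)" for i
  have eb: "e i \<in> block \<beta> i" if "1 \<le> i" "i \<le> length \<beta>" for i
    using block_last[OF pos that] unfolding e_def .
  define ee where "ee i = e i - 1" for i
  have ee: "ee i + 1 \<in> block \<beta> i" "ee i < N" if "1 \<le> i" "i \<le> length \<beta>" for i
    using eb[OF that] block_bound[OF eb[OF that]] N unfolding ee_def by auto
  have eeless: "ee i < ee j" if "1 \<le> i" "i < j" "j \<le> length \<beta>" for i j
    using block_less[OF ee(1)[of i] ee(1)[of j]] that by auto
  have fatP: "(i, k) \<in> P" if h1: "(ee i + 1, ee k + 1) \<in> fat \<beta> P" and "1 \<le> i" "i \<le> length \<beta>" "1 \<le> k" "k \<le> length \<beta>" for i k
  proof -
    obtain i' k' where "(i', k') \<in> P" "ee i + 1 \<in> block \<beta> i'" "ee k + 1 \<in> block \<beta> k'" using h1 by (auto simp: fat_def)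
    moreover have "i' = i" "k' = k" using calculation ee that block_unique by blast+
    ultimately show ?thesis by simp
  qed
  have inP: "1 \<le> j \<and> j < k \<and> k \<le> length \<beta>" if "(j, k) \<in> P" for j k
    using that Psub unfolding chain_order_def by auto
  define X where "X s t = (mat N N (\<lambda>(a, b). if a = ee s \<and> b = ee t then 1 else 0) :: 'a mat)" for s t
  have Xc: "X s t \<in> carrier_mat N N" for s t by (simp add: X_def)
  have Xd[simp]: "dim_row (X s t) = N" "dim_col (X s t) = N" for s t by (simp_all add: X_def)
  have XE: "X s t $$ (a, b) = (if a = ee s \<and> b = ee t then 1 else 0)" if "a < N" "b < N" for s t a b
    using that by (simp add: X_def)
  have Xin: "X s t \<in> ut_lie N (fat \<beta> P)" if st: "(s, t) \<in> P" for s t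
    unfolding ut_lie_def
  proof (intro CollectI conjI allI impI Xc)
    fix a b assume "a < N" "b < N" "X s t $$ (a, b) \<noteq> 0"
    then have "a = ee s" "b = ee t" using XE by (auto split: if_splits)
    moreover have "ee s + 1 \<in> block \<beta> s" "ee t + 1 \<in> block \<beta> t" using ee inP[OF st] by auto
    ultimately show "(a + 1, b + 1) \<in> fat \<beta> P" using st unfolding fat_def by blast
  qed
  show ?thesis
    unfolding is_normal_subposet_def
  proof (intro conjI allI impI)
    show "is_subposet {1..length \<beta>} (chain_order (length \<beta>)) P" by (rule sub)
  next
    fix i j k l assume jk: "(j, k) \<in> P" and ij: "(i, j) \<in> chain_order (length \<beta>)"
    have r: "1 \<le> i" "i < j" "j < k" "k \<le> length \<beta>" using ij inP[OF jk] unfolding chain_order_def by auto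
    define p where "p = ee i" define q where "q = ee j" define r' where "r' = ee k"
    have pq: "p < q" "q < r'" using eeless r unfolding p_def q_def r'_def by auto
    have lt: "p < N" "q < N" "r' < N" using ee r unfolding p_def q_def r'_def by auto
    let ?g = "gm N p q (1::'a)"
    have "?g \<in> Parabolic \<beta>"
    proof -
      have b: "p + 1 \<in> block \<beta> i" "q + 1 \<in> block \<beta> j" using ee r unfolding p_def q_def by auto
      show ?thesis using gm_Parabolic[OF comp lt(1,2) _ b] pq r by auto
    qed
    then have gn: "?g \<in> normalizer N (UT N (fat \<beta> P))" using H by blast
    obtain y where y: "y \<in> ut_lie N (fat \<beta> P)" "?g * (1\<^sub>m N + X j k) = (1\<^sub>m N + y) * ?g"
      using normalizer_conj[OF gn Xin[OF jk]] by blast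
    have yc: "y \<in> carrier_mat N N" using y(1) by (simp add: ut_lie_def)
    have Ac: "1\<^sub>m N + X j k \<in> carrier_mat N N" using Xc[of j k] by simp
    have Bc: "1\<^sub>m N + y \<in> carrier_mat N N" using yc by simp
    have yd[simp]: "dim_row y = N" "dim_col y = N" using yc by auto
    have "(?g * (1\<^sub>m N + X j k)) $$ (p, r') = 1"
      using gm_left[OF Ac lt(1) lt(3) lt(2), of p 1] XE[OF lt(1) lt(3), of j k] XE[OF lt(2) lt(3), of j k] lt pq
      unfolding q_def r'_def by simp
    moreover have "((1\<^sub>m N + y) * ?g) $$ (p, r') = y $$ (p, r')"
      using gm_right[OF Bc lt(1) lt(3) lt(1), of q 1] yc lt pq by simp
    ultimately have "y $$ (p, r') \<noteq> 0" using y(2) by simp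
    then have "(p + 1, r' + 1) \<in> fat \<beta> P" using y(1) lt unfolding ut_lie_def by blast
    then show "(i, k) \<in> P" using fatP r unfolding p_def r'_def by simp
  next
    fix i j k l assume jk: "(j, k) \<in> P" and kl: "(k, l) \<in> chain_order (length \<beta>)"
    have r: "1 \<le> j" "j < k" "k < l" "l \<le> length \<beta>" using kl inP[OF jk] unfolding chain_order_def by auto
    define p where "p = ee j" define q where "q = ee k" define r' where "r' = ee l"
    have pq: "p < q" "q < r'" using eeless r unfolding p_def q_def r'_def by auto
    have lt: "p < N" "q < N" "r' < N" using ee r unfolding p_def q_def r'_def by auto
    let ?g = "gm N q r' (1::'a)"
    have "?g \<in> Parabolic \<beta>"
    proof -
      have b: "q + 1 \<in> block \<beta> k" "r' + 1 \<in> block \<beta> l" using ee r unfolding q_def r'_def by auto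
      show ?thesis using gm_Parabolic[OF comp lt(2,3) _ b] pq r by auto
    qed
    then have gn: "?g \<in> normalizer N (UT N (fat \<beta> P))" using H by blast
    obtain y where y: "y \<in> ut_lie N (fat \<beta> P)" "?g * (1\<^sub>m N + X j k) = (1\<^sub>m N + y) * ?g"
      using normalizer_conj[OF gn Xin[OF jk]] by blast
    have yc: "y \<in> carrier_mat N N" using y(1) by (simp add: ut_lie_def)
    have Ac: "1\<^sub>m N + X j k \<in> carrier_mat N N" using Xc[of j k] by simp
    have Bc: "1\<^sub>m N + y \<in> carrier_mat N N" using yc by simp
    have yd[simp]: "dim_row y = N" "dim_col y = N" using yc by auto
    have "(?g * (1\<^sub>m N + X j k)) $$ (p, q) = 1"
      using gm_left[OF Ac lt(1) lt(2) lt(3), of q 1] XE[OF lt(1) lt(2), of j k] XE[OF lt(3) lt(2), of j k] lt pq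
      unfolding p_def q_def by simp
    moreover have "((1\<^sub>m N + y) * ?g) $$ (p, q) = y $$ (p, q)"
      using gm_right[OF Bc lt(1) lt(2) lt(2), of r' 1] yc lt pq by simp
    moreover have "(?g * (1\<^sub>m N + X j k)) $$ (p, r') = 0"
      using gm_left[OF Ac lt(1) lt(3) lt(3), of q 1] XE[OF lt(1) lt(3), of j k] XE[OF lt(3) lt(3), of j k] lt pq
      unfolding p_def q_def by simp
    moreover have "((1\<^sub>m N + y) * ?g) $$ (p, r') = y $$ (p, r') + y $$ (p, q)"
      using gm_right[OF Bc lt(1) lt(3) lt(2), of r' 1] yc lt pq by simp
    ultimately have "y $$ (p, r') \<noteq> 0" using y(2) by (metis add_cancel_right_left one_neq_zero)
    then have "(p + 1, r' + 1) \<in> fat \<beta> P" using y(1) lt unfolding ut_lie_def by blast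
    then show "(j, l) \<in> P" using fatP r unfolding p_def r'_def by simp
  qed
qed


theorem mainTheorem4:
  fixes \<beta> :: "nat list" and N :: nat and P :: "(nat \<times> nat) set"
    and F :: "'a::{field, finite} itself"
  assumes comp: "is_composition \<beta> N"
    and sub: "is_subposet {1..length \<beta>} (chain_order (length \<beta>)) P"
  shows "(is_normal_subposet {1..length \<beta>} (chain_order (length \<beta>)) P
            \<longleftrightarrow> (is_normal_subposet {1..N} (Q_order \<beta>) (fat \<beta> P)
                 \<and> levi_compatible F \<beta> (fat \<beta> P)))
       \<and> (is_normal_subposet {1..length \<beta>} (chain_order (length \<beta>)) P
            \<longleftrightarrow> (Parabolic \<beta> :: 'a mat set) \<subseteq> normalizer N (UT N (fat \<beta> P)))"
proof -
  have N: "sum_list \<beta> = N" and pos: "\<forall>b \<in> set \<beta>. 0 < b" using comp by (auto simp: is_composition_def)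
  have A: "is_normal_subposet {1..length \<beta>} (chain_order (length \<beta>)) P
     \<longleftrightarrow> is_normal_subposet {1..N} (Q_order \<beta>) (fat \<beta> P)"
    using fat_normal_iff[OF pos sub] N by simp
  have B: "is_normal_subposet {1..length \<beta>} (chain_order (length \<beta>)) P
            \<longleftrightarrow> (Parabolic \<beta> :: 'a mat set) \<subseteq> normalizer N (UT N (fat \<beta> P))"
    using parabolic_normalizes[OF comp] normalizer_forces_normal[OF comp sub] by blast
  have L: "levi_compatible F \<beta> (fat \<beta> P) \<longleftrightarrow> (Levi \<beta> :: 'a mat set) \<subseteq> normalizer N (UT N (fat \<beta> P))"
    unfolding levi_compatible_def N ..
  show ?thesis using A B L Levi_sub_Parabolic[of \<beta>] by blast
qed

end
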